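(* Let $\mathcal{U}$ be a finite set of submitted data units, each with a submitted identity, let $e_\theta$ be an evidence function whose graph on $\mathcal{U}$ has connected components (clusters) $C_1,\dots,C_K$, let $R_\theta$ be a cluster representative operator, and let $\bar v_\theta$ be the resulting quotient game on $[K]$. Let the quotient semivalue attribution pay submitted identity $i$ the amount $p_i^{Q,\omega}(S)=\sum_{k=1}^K a_{i,k}\,\varphi_k^\omega(\bar v_\theta)$ with within-cluster shares $a_{i,k}\in[0,1]$, $\sum_i a_{i,k}=1$. Suppose a manipulation $\alpha$ by latent provider $i$, replacing identity $i$ by pseudonyms $I_i^\alpha$ and producing profile $S^\alpha$ with quotient game $\bar v_\theta^\alpha$ and shares $a^\alpha_{j,k}$, is quotient-stable, and the within-cluster allocation rule is false-name-neutral. Then for any semivalue weights $\omega$ and any value function $\bar v_\theta$, the additive false-name gain \[\Gamma_i=\sum_{j\in I_i^\alpha}p_j^{Q,\omega}(S^\alpha)-p_i^{Q,\omega}(S)\] equals $0$; that is, quotient semivalue attribution is exactly false-name-proof against $\alpha$.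
   Context: Evidence function: $e_\theta(u,u')\in\{0,1\}$; the graph $G_\theta$ on $\mathcal{U}$ has an edge between $u,u'$ iff $e_\theta(u,u')=1$, and its connected components $C_1,\dots,C_K$ are the attribution clusters. A cluster representative $R_\theta$ maps each cluster to a multiset of canonical training units (e.g., collapsing exact duplicates). The quotient game is $\bar v_\theta(Q)=U(A(\bigcup_{k\in Q}R_\theta(C_k)))-U(A(\emptyset))$ for $Q\subseteq[K]$, where $A$ is a learner mapping a multiset of training examples to a model and $U$ is a utility. Semivalue: $\varphi_k^\omega(w)=\sum_{Q\subseteq[K]\setminus\{k\}}\omega_{K,|Q|}[w(Q\cup\{k\})-w(Q)]$ with $\omega_{K,s}\ge0$, $\sum_s\binom{K-1}{s}\omega_{K,s}=1$. Quotient-stable: the manipulation leaves (a) the set of clusters unchanged up to relabelling of cluster ids and (b) each representative $R_\theta(C_k)$ unchanged as a multiset of canonical training units. False-name-neutral: for every cluster $k$, $\sum_{j\in I_i^\alpha}a^\alpha_{j,k}=a_{i,k}$ (simultaneously for all $k$). *)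

theory Defs
  imports Complex_Main "HOL-Library.Multiset"
begin

definition ev_edge :: "('u \<Rightarrow> 'u \<Rightarrow> bool) \<Rightarrow> 'u set \<Rightarrow> 'u \<Rightarrow> 'u \<Rightarrow> bool" where
  "ev_edge e Us x y \<longleftrightarrow> x \<in> Us \<and> y \<in> Us \<and> (e x y \<or> e y x)"

definition clusters :: "('u \<Rightarrow> 'u \<Rightarrow> bool) \<Rightarrow> 'u set \<Rightarrow> 'u set set" where
  "clusters e Us = (\<lambda>u. {v \<in> Us. (ev_edge e Us)\<^sup>*\<^sup>* u v}) ` Us"

text \<open>Quotient game on the set of clusters (clusters themselves serve as cluster ids).\<close>
definition quotient_game ::
  "('u set \<Rightarrow> 't multiset) \<Rightarrow> ('t multiset \<Rightarrow> 'm) \<Rightarrow> ('m \<Rightarrow> real) \<Rightarrow> 'u set set \<Rightarrow> real" where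
  "quotient_game R A Ut Q = Ut (A (\<Sum>C\<in>Q. R C)) - Ut (A {#})"

definition semivalue_weights :: "(nat \<Rightarrow> nat \<Rightarrow> real) \<Rightarrow> bool" where
  "semivalue_weights \<omega> \<longleftrightarrow> (\<forall>K s. 0 \<le> \<omega> K s) \<and>
     (\<forall>K\<ge>1. (\<Sum>s\<le>K - 1. real ((K - 1) choose s) * \<omega> K s) = 1)"

definition semivalue :: "(nat \<Rightarrow> nat \<Rightarrow> real) \<Rightarrow> 'p set \<Rightarrow> ('p set \<Rightarrow> real) \<Rightarrow> 'p \<Rightarrow> real" where
  "semivalue \<omega> N w k = (\<Sum>Q\<in>Pow (N - {k}). \<omega> (card N) (card Q) * (w (insert k Q) - w Q))"

definition qpay ::
  "(nat \<Rightarrow> nat \<Rightarrow> real) \<Rightarrow> ('u \<Rightarrow> 'u \<Rightarrow> bool) \<Rightarrow> 'u set \<Rightarrow> ('u set \<Rightarrow> 't multiset)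
    \<Rightarrow> ('t multiset \<Rightarrow> 'm) \<Rightarrow> ('m \<Rightarrow> real) \<Rightarrow> ('i \<Rightarrow> 'u set \<Rightarrow> real) \<Rightarrow> 'i \<Rightarrow> real" where
  "qpay \<omega> e Us R A Ut a j =
     (\<Sum>C\<in>clusters e Us. a j C * semivalue \<omega> (clusters e Us) (quotient_game R A Ut) C)"

end

theory Submission
  imports Defs
begin

theorem theorem2:
  fixes e :: "'u \<Rightarrow> 'u \<Rightarrow> bool"
    and Us Us' :: "'u set"
    and R :: "'u set \<Rightarrow> 't multiset"
    and A :: "'t multiset \<Rightarrow> 'm" and Ut :: "'m \<Rightarrow> real"
    and Ids Ids' I :: "'i set" and i :: 'i
    and a a' :: "'i \<Rightarrow> 'u set \<Rightarrow> real"
    and \<omega> :: "nat \<Rightarrow> nat \<Rightarrow> real"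
    and \<sigma> :: "'u set \<Rightarrow> 'u set"
  assumes "finite Us" and "finite Us'"
    and "finite Ids" and "i \<in> Ids"
    and "finite I" and "I \<inter> (Ids - {i}) = {}" and "Ids' = (Ids - {i}) \<union> I"
    and "\<And>j C. j \<in> Ids \<Longrightarrow> C \<in> clusters e Us \<Longrightarrow> 0 \<le> a j C \<and> a j C \<le> 1"
    and "\<And>C. C \<in> clusters e Us \<Longrightarrow> (\<Sum>j\<in>Ids. a j C) = 1"
    and "\<And>j C. j \<in> Ids' \<Longrightarrow> C \<in> clusters e Us' \<Longrightarrow> 0 \<le> a' j C \<and> a' j C \<le> 1"
    and "\<And>C. C \<in> clusters e Us' \<Longrightarrow> (\<Sum>j\<in>Ids'. a' j C) = 1"
    and semi: "semivalue_weights \<omega>"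
    \<comment> \<open>quotient-stable: cluster relabelling preserving representatives\<close>
    and relabel: "bij_betw \<sigma> (clusters e Us) (clusters e Us')"
    and rep: "\<And>C. C \<in> clusters e Us \<Longrightarrow> R (\<sigma> C) = R C"
    \<comment> \<open>false-name-neutral\<close>
    and fnn: "\<And>C. C \<in> clusters e Us \<Longrightarrow> (\<Sum>j\<in>I. a' j (\<sigma> C)) = a i C"
  shows "(\<Sum>j\<in>I. qpay \<omega> e Us' R A Ut a' j) - qpay \<omega> e Us R A Ut a i = 0"
proof -
  define N where "N = clusters e Us"
  define N' where "N' = clusters e Us'"
  define g where "g = quotient_game R A Ut"
  have fin: "finite N" unfolding N_def clusters_def using assms(1) by simp
  have bij: "bij_betw \<sigma> N N'" using relabel unfolding N_def N'_def .
  have inj: "inj_on \<sigma> N" using bij_betw_imp_inj_on[OF bij] .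
  have img: "\<sigma> ` N = N'" using bij_betw_imp_surj_on[OF bij] .
  have gQ: "g (\<sigma> ` Q) = g Q" if "Q \<subseteq> N" for Q
  proof -
    have "inj_on \<sigma> Q" using inj that inj_on_subset by blast
    then have "(\<Sum>C\<in>\<sigma> ` Q. R C) = (\<Sum>C\<in>Q. R (\<sigma> C))" by (rule sum.reindex[unfolded comp_def])
    also have "\<dots> = (\<Sum>C\<in>Q. R C)" using rep that unfolding N_def by (intro sum.cong) auto
    finally show ?thesis unfolding g_def quotient_game_def by simp
  qed
  have sv: "semivalue \<omega> N' g (\<sigma> C) = semivalue \<omega> N g C" if C: "C \<in> N" for C
  proof -
    have cardN: "card N' = card N" using bij_betw_same_card[OF bij] by simp
    have injP: "inj_on ((`) \<sigma>) (Pow (N - {C}))"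
      proof (rule inj_onI)
      fix X Y assume "X \<in> Pow (N - {C})" "Y \<in> Pow (N - {C})" "\<sigma> ` X = \<sigma> ` Y"
      then show "X = Y" using inj_on_image_eq_iff[OF inj, of X Y] by auto
    qed
    have PP: "Pow (N' - {\<sigma> C}) = (`) \<sigma> ` Pow (N - {C})"
    proof
      show "Pow (N' - {\<sigma> C}) \<subseteq> (`) \<sigma> ` Pow (N - {C})"
      proof
        fix Q' assume "Q' \<in> Pow (N' - {\<sigma> C})"
        then have Q': "Q' \<subseteq> N'" "\<sigma> C \<notin> Q'" by auto
        define Q where "Q = N \<inter> \<sigma> -` Q'"
        have "\<sigma> ` Q = Q'" using Q' img unfolding Q_def by auto
        moreover have "Q \<in> Pow (N - {C})" using Q' unfolding Q_def by auto
        ultimately show "Q' \<in> (`) \<sigma> ` Pow (N - {C})" by blast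
      qed
      show "(`) \<sigma> ` Pow (N - {C}) \<subseteq> Pow (N' - {\<sigma> C})"
      proof
        fix Q' assume "Q' \<in> (`) \<sigma> ` Pow (N - {C})"
        then obtain X where X: "X \<subseteq> N - {C}" "Q' = \<sigma> ` X" by blast
        have "\<sigma> x \<noteq> \<sigma> C" if "x \<in> X" for x
          using X that C inj_on_eq_iff[OF inj, of x C] by blast
        moreover have "\<sigma> ` X \<subseteq> N'" using X img by blast
        ultimately show "Q' \<in> Pow (N' - {\<sigma> C})" using X by blast
      qed
    qed
    have "semivalue \<omega> N' g (\<sigma> C) = (\<Sum>Q\<in>Pow (N - {C}). \<omega> (card N') (card (\<sigma> ` Q)) * (g (insert (\<sigma> C) (\<sigma> ` Q)) - g (\<sigma> ` Q)))"
      unfolding semivalue_def PP using injP by (simp add: sum.reindex)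
    also have "\<dots> = semivalue \<omega> N g C" unfolding semivalue_def
    proof (intro sum.cong refl)
      fix Q assume Q: "Q \<in> Pow (N - {C})"
      have "card (\<sigma> ` Q) = card Q" using Q inj by (intro card_image) (auto intro: inj_on_subset)
      moreover have "g (insert (\<sigma> C) (\<sigma> ` Q)) = g (insert C Q)"
        using gQ[of "insert C Q"] Q C by auto
      moreover have "g (\<sigma> ` Q) = g Q" using gQ Q by auto
      ultimately show "\<omega> (card N') (card (\<sigma> ` Q)) * (g (insert (\<sigma> C) (\<sigma> ` Q)) - g (\<sigma> ` Q)) =
           \<omega> (card N) (card Q) * (g (insert C Q) - g Q)" using cardN by simp
    qed
    finally show ?thesis .
  qed
  have "(\<Sum>j\<in>I. qpay \<omega> e Us' R A Ut a' j) = (\<Sum>j\<in>I. \<Sum>C'\<in>N'. a' j C' * semivalue \<omega> N' g C')"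
    unfolding qpay_def N'_def g_def ..
  also have "\<dots> = (\<Sum>C'\<in>N'. (\<Sum>j\<in>I. a' j C') * semivalue \<omega> N' g C')"
    by (subst sum.swap) (simp add: sum_distrib_right)
  also have "\<dots> = (\<Sum>C\<in>N. (\<Sum>j\<in>I. a' j (\<sigma> C)) * semivalue \<omega> N' g (\<sigma> C))"
    by (rule sum.reindex_bij_betw[OF bij, symmetric])
  also have "\<dots> = (\<Sum>C\<in>N. a i C * semivalue \<omega> N g C)"
  proof (rule sum.cong[OF refl])
    fix C assume "C \<in> N"
    then show "(\<Sum>j\<in>I. a' j (\<sigma> C)) * semivalue \<omega> N' g (\<sigma> C) = a i C * semivalue \<omega> N g C"
      using fnn[of C] sv[of C] unfolding N_def by simp
  qed
  also have "\<dots> = qpay \<omega> e Us R A Ut a i" unfolding qpay_def N_def g_def ..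
  finally show ?thesis by simp
qed

end
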